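(* Let $d\ge2$ be an integer, $X,Y$ disjoint finite sets with $|X|=m$, $|Y|=n$, and $\Gamma$ a symmetric matrix indexed by $X\cup Y$ with entries in $\mathbb{Z}_d$ and zero diagonal. Let $f\ge0$ be an integer and suppose that for every subset $Z\subset Y$ with $|Z|\le 2f$ the $(Y\setminus Z)\times(X\cup Z)$-submatrix of $\Gamma$ is non-singular over $\mathbb{Z}_d$, i.e. $\sum_{x\in X\cup Z}\Gamma_{yx}h_x\equiv0 \pmod d$ for all $y\in Y\setminus Z$ implies $h_x\equiv0\pmod d$ for all $x\in X\cup Z$. Then the graph code $V_\Gamma:\mathcal{H}_X\to\mathcal{H}_Y$ corrects $f$ errors.
   Context: For each $x\in X\cup Y$ let $\mathcal{H}_x\cong\mathbb{C}^d$ with orthonormal basis $|j\rangle$, $j\in\mathbb{Z}_d$; $\mathcal{H}_W=\bigotimes_{x\in W}\mathcal{H}_x$ with product basis $|j_W\rangle$. The graph code $V_\Gamma:\mathcal{H}_X\to\mathcal{H}_Y$ is defined by $\langle j_Y|V_\Gamma|j_X\rangle=d^{-n/2}\exp\bigl(\frac{i\pi}{d}\sum_{x,y\in X\cup Y}j_x\Gamma_{xy}j_y\bigr)$. Identify $\mathcal{H}_Y$ with $\mathcal{H}^{\otimes n}$, $\mathcal{H}=\mathbb{C}^d$. Let $\mathcal{E}_f$ be the linear span of all operators $A_1\otimes\cdots\otimes A_n$ on $\mathcal{H}^{\otimes n}$ with $A_i\ne\mathbb{1}$ for at most $f$ indices $i$. A linear map $V:\mathcal{H}_X\to\mathcal{H}^{\otimes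 n}$ corrects $f$ errors if it satisfies the Knill–Laflamme condition for $\mathcal{E}_f$: for all $F_1,F_2\in\mathcal{E}_f$ there is a number $\omega(F_1^*F_2)$ such that $\langle V\phi_1,F_1^*F_2V\phi_2\rangle=\langle\phi_1,\phi_2\rangle\,\omega(F_1^*F_2)$ for all $\phi_1,\phi_2\in\mathcal{H}_X$. *)

theory Defs
  imports Complex_Main
begin

text \<open>Basis labels of H_W: configurations j : W -> Z_d, encoded as functions
  'a => nat with values < d on W and 0 outside W (extensional).\<close>
definition confs :: "nat \<Rightarrow> 'a set \<Rightarrow> ('a \<Rightarrow> nat) set" where
  "confs d W = {j. (\<forall>x\<in>W. j x < d) \<and> (\<forall>x. x \<notin> W \<longrightarrow> j x = 0)}"

definition inner_W :: "nat \<Rightarrow> 'a set \<Rightarrow> (('a \<Rightarrow> nat) \<Rightarrow> complex) \<Rightarrow> (('a \<Rightarrow> nat) \<Rightarrow> complex) \<Rightarrow> complex" where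
  "inner_W d W u v = (\<Sum>j\<in>confs d W. cnj (u j) * v j)"

text \<open>Matrix element <j_Y | V_Gamma | j_X>, n = |Y|.\<close>
definition graph_code_kernel :: "nat \<Rightarrow> 'a set \<Rightarrow> 'a set \<Rightarrow> ('a \<Rightarrow> 'a \<Rightarrow> int)
    \<Rightarrow> ('a \<Rightarrow> nat) \<Rightarrow> ('a \<Rightarrow> nat) \<Rightarrow> complex" where
  "graph_code_kernel d X Y \<Gamma> jY jX =
     (let j = (\<lambda>x. jX x + jY x) in
      complex_of_real (real d powr (- real (card Y) / 2)) *
      exp (\<i> * complex_of_real (pi / real d) *
           of_int (\<Sum>x\<in>X \<union> Y. \<Sum>y\<in>X \<union> Y. int (j x) * \<Gamma> x y * int (j y))))"

definition graph_code :: "nat \<Rightarrow> 'a set \<Rightarrow> 'a set \<Rightarrow> ('a \<Rightarrow> 'a \<Rightarrow> int)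
    \<Rightarrow> (('a \<Rightarrow> nat) \<Rightarrow> complex) \<Rightarrow> (('a \<Rightarrow> nat) \<Rightarrow> complex)" where
  "graph_code d X Y \<Gamma> \<phi> = (\<lambda>jY. \<Sum>jX\<in>confs d X. graph_code_kernel d X Y \<Gamma> jY jX * \<phi> jX)"

text \<open>Operators on H_Y are given by their matrix kernels F j' j (j, j' in confs d Y).\<close>
definition apply_op :: "nat \<Rightarrow> 'a set \<Rightarrow> (('a \<Rightarrow> nat) \<Rightarrow> ('a \<Rightarrow> nat) \<Rightarrow> complex)
    \<Rightarrow> (('a \<Rightarrow> nat) \<Rightarrow> complex) \<Rightarrow> (('a \<Rightarrow> nat) \<Rightarrow> complex)" where
  "apply_op d Y F v = (\<lambda>j'. \<Sum>j\<in>confs d Y. F j' j * v j)"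

definition adj_comp :: "nat \<Rightarrow> 'a set \<Rightarrow> (('a \<Rightarrow> nat) \<Rightarrow> ('a \<Rightarrow> nat) \<Rightarrow> complex)
    \<Rightarrow> (('a \<Rightarrow> nat) \<Rightarrow> ('a \<Rightarrow> nat) \<Rightarrow> complex) \<Rightarrow> (('a \<Rightarrow> nat) \<Rightarrow> ('a \<Rightarrow> nat) \<Rightarrow> complex)" where
  "adj_comp d Y F1 F2 = (\<lambda>a b. if a \<in> confs d Y \<and> b \<in> confs d Y
      then (\<Sum>c\<in>confs d Y. cnj (F1 c a) * F2 c b) else 0)"

definition is_id_mat :: "nat \<Rightarrow> (nat \<Rightarrow> nat \<Rightarrow> complex) \<Rightarrow> bool" where
  "is_id_mat d A \<longleftrightarrow> (\<forall>i<d. \<forall>k<d. A i k = (if i = k then 1 else 0))"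

definition tensor_op :: "'a set \<Rightarrow> ('a \<Rightarrow> nat \<Rightarrow> nat \<Rightarrow> complex)
    \<Rightarrow> (('a \<Rightarrow> nat) \<Rightarrow> ('a \<Rightarrow> nat) \<Rightarrow> complex)" where
  "tensor_op Y A = (\<lambda>j' j. \<Prod>y\<in>Y. A y (j' y) (j y))"

definition error_space :: "nat \<Rightarrow> 'a set \<Rightarrow> nat
    \<Rightarrow> (('a \<Rightarrow> nat) \<Rightarrow> ('a \<Rightarrow> nat) \<Rightarrow> complex) set" where
  "error_space d Y f = {F. \<exists>(N::nat) (c::nat \<Rightarrow> complex) (A::nat \<Rightarrow> 'a \<Rightarrow> nat \<Rightarrow> nat \<Rightarrow> complex).
      (\<forall>k<N. card {y\<in>Y. \<not> is_id_mat d (A k y)} \<le> f) \<and>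
      F = (\<lambda>j' j. \<Sum>k<N. c k * tensor_op Y (A k) j' j)}"

text \<open>Knill--Laflamme condition for V : H_X -> H_Y and the error space E_f.\<close>
definition corrects_errors :: "nat \<Rightarrow> 'a set \<Rightarrow> 'a set
    \<Rightarrow> ((('a \<Rightarrow> nat) \<Rightarrow> complex) \<Rightarrow> (('a \<Rightarrow> nat) \<Rightarrow> complex)) \<Rightarrow> nat \<Rightarrow> bool" where
  "corrects_errors d X Y V f \<longleftrightarrow>
     (\<exists>\<omega> :: (('a \<Rightarrow> nat) \<Rightarrow> ('a \<Rightarrow> nat) \<Rightarrow> complex) \<Rightarrow> complex.
        \<forall>F1\<in>error_space d Y f. \<forall>F2\<in>error_space d Y f. \<forall>\<phi>1 \<phi>2.
          inner_W d Y (V \<phi>1) (apply_op d Y (adj_comp d Y F1 F2) (V \<phi>2))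
            = inner_W d X \<phi>1 \<phi>2 * \<omega> (adj_comp d Y F1 F2))"

end

theory Submission imports Defs "HOL-Analysis.Analysis" begin

lemma confs_finite: "finite A \<Longrightarrow> finite (confs d A)"
proof -
  assume "finite A"
  have "confs d A = {f. \<forall>x. (x \<in> A \<longrightarrow> f x \<in> {..<d}) \<and> (x \<notin> A \<longrightarrow> f x = 0)}"
    by (auto simp: confs_def)
  thus ?thesis using finite_set_of_finite_funs[OF \<open>finite A\<close>, of "{..<d}" 0] by simp
qed

lemma confs_split_bij:
  assumes "A \<inter> B = {}"
  shows "bij_betw (\<lambda>(u,s). (\<lambda>x. u x + s x)) (confs d A \<times> confs d B) (confs d (A \<union> B))"
proof (rule bij_betwI[where g = "\<lambda>j. (\<lambda>x. if x \<in> A then j x else 0, \<lambda>x. if x \<in> B then j x else 0)"])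
  show "(\<lambda>(u,s). (\<lambda>x. u x + s x)) \<in> confs d A \<times> confs d B \<rightarrow> confs d (A \<union> B)"
    using assms by (auto simp: confs_def)
  show "(\<lambda>j. (\<lambda>x. if x \<in> A then j x else 0, \<lambda>x. if x \<in> B then j x else 0)) \<in> confs d (A \<union> B) \<rightarrow> confs d A \<times> confs d B"
    by (auto simp: confs_def)
  show "\<And>x. x \<in> confs d A \<times> confs d B \<Longrightarrow>
         (\<lambda>j. (\<lambda>x. if x \<in> A then j x else 0, \<lambda>x. if x \<in> B then j x else 0)) ((\<lambda>(u,s). (\<lambda>x. u x + s x)) x) = x"
    using assms by (auto simp: confs_def fun_eq_iff) (metis disjoint_iff)+
  show "\<And>y. y \<in> confs d (A \<union> B) \<Longrightarrow>
         (\<lambda>(u,s). (\<lambda>x. u x + s x)) ((\<lambda>j. (\<lambda>x. if x \<in> A then j x else 0, \<lambda>x. if x \<in> B then j x else 0)) y) = y"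
    using assms by (auto simp: confs_def fun_eq_iff)
qed

lemma confs_split_sum:
  assumes "A \<inter> B = {}" "finite A" "finite B"
  shows "(\<Sum>j\<in>confs d (A \<union> B). g j) = (\<Sum>u\<in>confs d A. \<Sum>s\<in>confs d B. g (\<lambda>x. u x + s x))"
proof -
  have "(\<Sum>j\<in>confs d (A \<union> B). g j) = (\<Sum>p\<in>confs d A \<times> confs d B. g ((\<lambda>(u,s). (\<lambda>x. u x + s x)) p))"
    using sum.reindex_bij_betw[OF confs_split_bij[OF assms(1)], of g, symmetric] by simp
  also have "\<dots> = (\<Sum>(u,s)\<in>confs d A \<times> confs d B. g (\<lambda>x. u x + s x))"
    by (rule sum.cong) auto
  also have "\<dots> = (\<Sum>u\<in>confs d A. \<Sum>s\<in>confs d B. g (\<lambda>x. u x + s x))"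
    by (rule sum.cartesian_product[symmetric])
  finally show ?thesis .
qed

lemma confs_empty: "confs d {} = {\<lambda>_. 0}"
  by (auto simp: confs_def)

lemma confs_single_bij: "bij_betw (\<lambda>k. (\<lambda>x. if x = y then k else 0)) {..<d} (confs d {y})"
  by (rule bij_betwI[where g = "\<lambda>u. u y"]) (auto simp: confs_def fun_eq_iff)

lemma confs_prod_sum:
  assumes "finite A"
  shows "(\<Sum>u\<in>confs d A. \<Prod>y\<in>A. g y (u y)) = (\<Prod>y\<in>A. \<Sum>k<d. (g y k :: 'b::comm_semiring_1))"
  using assms
proof (induction A rule: finite_induct)
  case empty
  then show ?case by (simp add: confs_empty)
next
  case (insert y A)
  have "(\<Sum>u\<in>confs d (insert y A). \<Prod>z\<in>insert y A. g z (u z))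
     = (\<Sum>u\<in>confs d {y}. \<Sum>s\<in>confs d A. \<Prod>z\<in>insert y A. g z (u z + s z))"
    using confs_split_sum[where A="{y}" and B=A and d=d] insert by simp
  also have "\<dots> = (\<Sum>u\<in>confs d {y}. \<Sum>s\<in>confs d A. g y (u y) * (\<Prod>z\<in>A. g z (s z)))"
  proof (intro sum.cong refl)
    fix u s assume u: "u \<in> confs d {y}" and s: "s \<in> confs d A"
    have "(\<Prod>z\<in>insert y A. g z (u z + s z)) = g y (u y + s y) * (\<Prod>z\<in>A. g z (u z + s z))"
      using insert by simp
    also have "\<dots> = g y (u y) * (\<Prod>z\<in>A. g z (s z))"
    proof -
      have u0: "\<forall>z\<in>A. u z = 0" using u insert(2) by (auto simp: confs_def)
      have "s y = 0" using s insert(2) by (auto simp: confs_def)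
      moreover have "(\<Prod>z\<in>A. g z (u z + s z)) = (\<Prod>z\<in>A. g z (s z))"
        using u0 by (intro prod.cong) auto
      ultimately show ?thesis by simp
    qed
    finally show "(\<Prod>z\<in>insert y A. g z (u z + s z)) = g y (u y) * (\<Prod>z\<in>A. g z (s z))" .
  qed
  also have "\<dots> = (\<Sum>u\<in>confs d {y}. g y (u y)) * (\<Sum>s\<in>confs d A. \<Prod>z\<in>A. g z (s z))"
    by (simp add: sum_product)
  also have "(\<Sum>u\<in>confs d {y}. g y (u y)) = (\<Sum>k<d. g y k)"
    using sum.reindex_bij_betw[OF confs_single_bij[of y d], of "\<lambda>u. g y (u y)"] by simp
  finally show ?case using insert by simp
qed


definition E :: "nat \<Rightarrow> int \<Rightarrow> complex" where
  "E d q = exp (\<i> * complex_of_real (pi / real d) * of_int q)"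

lemma E_add: "E d a * E d b = E d (a + b)"
  by (simp only: E_def exp_add[symmetric] of_int_add distrib_left)

lemma E_cnj: "cnj (E d a) = E d (- a)"
  by (simp add: E_def exp_cnj)

lemma E_0: "E d 0 = 1"
  by (simp add: E_def)

lemma E_2dm: assumes "d > 0" shows "E d (2 * int d * m) = 1"
proof -
  have "E d (2 * int d * m) = exp ((2 * complex_of_int m * pi) * \<i>)"
    unfolding E_def using assms by (simp add: field_simps)
  also have "\<dots> = 1" using exp_integer_2pi[of "of_int m"] by simp
  finally show ?thesis .
qed

lemma E_pow: "E d (2 * int k * L) = E d (2 * L) ^ k"
proof -
  have "E d (2 * int k * L) = exp (of_nat k * (\<i> * complex_of_real (pi / real d) * of_int (2 * L)))"
    unfolding E_def by (simp add: algebra_simps)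
  also have "\<dots> = E d (2 * L) ^ k" unfolding E_def by (rule exp_of_nat_mult)
  finally show ?thesis .
qed

lemma E_neq1: assumes "d > 0" "L mod int d \<noteq> 0" shows "E d (2 * L) \<noteq> 1"
proof
  assume "E d (2 * L) = 1"
  then obtain n :: int where n: "Im (\<i> * complex_of_real (pi / real d) * of_int (2 * L)) = of_int (2 * n) * pi"
    unfolding E_def exp_eq_1 by blast
  hence "pi / real d * (2 * of_int L) = 2 * of_int n * pi" by simp
  hence "real_of_int L = real d * of_int n" using assms(1) pi_gt_zero
    by (simp add: field_simps)
  hence "L = int d * n" by (metis of_int_eq_iff of_int_mult of_int_of_nat_eq)
  thus False using assms(2) by simp
qed

lemma E_geo:
  assumes "d > 0"
  shows "(\<Sum>k<d. E d (2 * int k * L)) = (if L mod int d = 0 then of_nat d else 0)"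
proof (cases "L mod int d = 0")
  case True
  then obtain m where "L = int d * m" by (metis dvd_def mod_0_imp_dvd)
  hence "\<And>k. E d (2 * int k * L) = 1"
    using E_2dm[OF assms, of "int k * m" for k] by (simp add: algebra_simps)
  thus ?thesis using True by simp
next
  case False
  have z: "E d (2 * L) \<noteq> 1" using E_neq1[OF assms False] .
  have zd: "E d (2 * L) ^ d = 1"
    using E_pow[of d d L] E_2dm[OF assms, of L] by (simp add: algebra_simps)
  have "(\<Sum>k<d. E d (2 * int k * L)) = (\<Sum>k<d. E d (2 * L) ^ k)" by (simp add: E_pow)
  also have "\<dots> = 0" using geometric_sum[OF z, of d] zd by simp
  finally show ?thesis using False by simp
qed


definition Qf :: "'a set \<Rightarrow> ('a \<Rightarrow> 'a \<Rightarrow> int) \<Rightarrow> ('a \<Rightarrow> int) \<Rightarrow> int" where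
  "Qf S G p = (\<Sum>x\<in>S. \<Sum>y\<in>S. p x * G x y * p y)"

definition Bf :: "'a set \<Rightarrow> ('a \<Rightarrow> 'a \<Rightarrow> int) \<Rightarrow> ('a \<Rightarrow> int) \<Rightarrow> ('a \<Rightarrow> int) \<Rightarrow> int" where
  "Bf S G p q = (\<Sum>x\<in>S. \<Sum>y\<in>S. p x * G x y * q y)"

lemma Bf_sym:
  assumes "\<forall>x\<in>S. \<forall>y\<in>S. G x y = G y x"
  shows "Bf S G p q = Bf S G q p"
proof -
  have "Bf S G p q = (\<Sum>y\<in>S. \<Sum>x\<in>S. p x * G x y * q y)"
    unfolding Bf_def by (rule sum.swap)
  also have "\<dots> = Bf S G q p" unfolding Bf_def
    using assms by (intro sum.cong refl) (simp add: algebra_simps)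
  finally show ?thesis .
qed

lemma Qf_add:
  assumes "\<forall>x\<in>S. \<forall>y\<in>S. G x y = G y x"
  shows "Qf S G (\<lambda>x. p x + q x) = Qf S G p + Qf S G q + 2 * Bf S G q p"
proof -
  have "Qf S G (\<lambda>x. p x + q x) = Qf S G p + Qf S G q + Bf S G p q + Bf S G q p"
    unfolding Qf_def Bf_def by (simp add: algebra_simps sum.distrib)
  thus ?thesis using Bf_sym[OF assms, of p q] by simp
qed

lemma Bf_diff: "Bf S G u p - Bf S G u q = Bf S G u (\<lambda>x. p x - q x)"
  unfolding Bf_def by (simp add: algebra_simps sum_subtractf)

lemma Bf_restrict:
  assumes "finite S" "W \<subseteq> S" "T \<subseteq> S" "\<forall>x. x \<notin> W \<longrightarrow> u x = 0" "\<forall>x. x \<notin> T \<longrightarrow> h x = 0"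
  shows "Bf S G u h = (\<Sum>y\<in>W. u y * (\<Sum>x\<in>T. G y x * h x))"
proof -
  have "Bf S G u h = (\<Sum>y\<in>S. u y * (\<Sum>x\<in>S. G y x * h x))"
    unfolding Bf_def by (simp add: sum_distrib_left mult.assoc)
  also have "\<dots> = (\<Sum>y\<in>W. u y * (\<Sum>x\<in>S. G y x * h x))"
    using assms by (intro sum.mono_neutral_right) auto
  also have "\<dots> = (\<Sum>y\<in>W. u y * (\<Sum>x\<in>T. G y x * h x))"
    using assms by (intro sum.cong refl arg_cong2[where f="(*)"] sum.mono_neutral_right) auto
  finally show ?thesis .
qed

lemma E_sum: "E d (\<Sum>i\<in>A. f i) = (\<Prod>i\<in>A. E d (f i))"
proof (cases "finite A")
  case True then show ?thesis
    by (induction A rule: finite_induct) (auto simp: E_0 E_add[symmetric])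
next
  case False then show ?thesis by (simp add: E_0)
qed

lemma kernel_eq:
  "graph_code_kernel d X Y \<Gamma> jY jX =
     complex_of_real (real d powr (- real (card Y) / 2)) * E d (Qf (X \<union> Y) \<Gamma> (\<lambda>x. int (jX x + jY x)))"
  by (simp add: graph_code_kernel_def Let_def E_def Qf_def)

lemma small_mod_eq:
  fixes a b :: int
  assumes "0 \<le> a" "a < D" "0 \<le> b" "b < D" "(a - b) mod D = 0"
  shows "a = b"
proof -
  have "a mod D = b mod D" using assms(5) by (simp add: mod_eq_dvd_iff dvd_eq_mod_eq_0)
  thus ?thesis using assms by simp
qed


lemma inner_sum:
  fixes d :: nat and X Y Z :: "'a set" and \<Gamma> :: "'a \<Rightarrow> 'a \<Rightarrow> int"
  assumes d: "d \<ge> 2" and finX: "finite X" and finY: "finite Y" and disj: "X \<inter> Y = {}"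
    and sym: "\<forall>x\<in>X \<union> Y. \<forall>y\<in>X \<union> Y. \<Gamma> x y = \<Gamma> y x"
    and Z: "Z \<subseteq> Y"
    and inj: "\<forall>h :: 'a \<Rightarrow> int. (\<forall>y\<in>Y - Z. (\<Sum>x\<in>X \<union> Z. \<Gamma> y x * h x) mod int d = 0) \<longrightarrow>
              (\<forall>x\<in>X \<union> Z. h x mod int d = 0)"
    and jX: "jX \<in> confs d X" and jX': "jX' \<in> confs d X" and s: "s \<in> confs d Z" and t: "t \<in> confs d Z"
  shows "(\<Sum>u\<in>confs d (Y - Z). cnj (graph_code_kernel d X Y \<Gamma> (\<lambda>x. u x + s x) jX') *
            graph_code_kernel d X Y \<Gamma> (\<lambda>x. u x + t x) jX)
     = (if jX' = jX \<and> s = t then complex_of_real (real d powr (- real (card Y) / 2) * real d powr (- real (card Y) / 2)) * of_nat d ^ card (Y - Z) else 0)"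
proof -
  define S where "S = X \<union> Y"
  define W where "W = Y - Z"
  define r where "r = real d powr (- real (card Y) / 2)"
  define w where "w = (\<lambda>x. int (jX x + t x))"
  define w' where "w' = (\<lambda>x. int (jX' x + s x))"
  define h where "h = (\<lambda>x. w x - w' x)"
  define L where "L = (\<lambda>y. \<Sum>x\<in>X \<union> Z. \<Gamma> y x * h x)"
  have finS: "finite S" using finX finY S_def by simp
  have finW: "finite W" using finY W_def by simp
  have symS: "\<forall>x\<in>S. \<forall>y\<in>S. \<Gamma> x y = \<Gamma> y x" using sym S_def by simp
  have XZ: "X \<inter> Z = {}" using disj Z by auto
  have step1: "cnj (graph_code_kernel d X Y \<Gamma> (\<lambda>x. u x + s x) jX') * graph_code_kernel d X Y \<Gamma> (\<lambda>x. u x + t x) jX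
      = complex_of_real (r * r) * E d (Qf S \<Gamma> w - Qf S \<Gamma> w') * (\<Prod>y\<in>W. E d (2 * int (u y) * L y))"
    if u: "u \<in> confs d W" for u
  proof -
    define ui where "ui = (\<lambda>x. int (u x))"
    have k1: "graph_code_kernel d X Y \<Gamma> (\<lambda>x. u x + t x) jX = complex_of_real r * E d (Qf S \<Gamma> (\<lambda>x. w x + ui x))"
      unfolding kernel_eq r_def S_def w_def ui_def by (simp add: algebra_simps)
    have k2: "graph_code_kernel d X Y \<Gamma> (\<lambda>x. u x + s x) jX' = complex_of_real r * E d (Qf S \<Gamma> (\<lambda>x. w' x + ui x))"
      unfolding kernel_eq r_def S_def w'_def ui_def by (simp add: algebra_simps)
    have "cnj (graph_code_kernel d X Y \<Gamma> (\<lambda>x. u x + s x) jX') * graph_code_kernel d X Y \<Gamma> (\<lambda>x. u x + t x) jX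
        = complex_of_real (r * r) * E d (Qf S \<Gamma> (\<lambda>x. w x + ui x) - Qf S \<Gamma> (\<lambda>x. w' x + ui x))"
      unfolding k1 k2 by (simp add: E_cnj mult_ac E_add[symmetric]) (metis E_add diff_conv_add_uminus)
    also have "Qf S \<Gamma> (\<lambda>x. w x + ui x) - Qf S \<Gamma> (\<lambda>x. w' x + ui x)
        = (Qf S \<Gamma> w - Qf S \<Gamma> w') + 2 * (Bf S \<Gamma> ui w - Bf S \<Gamma> ui w')"
      using Qf_add[OF symS, of w ui] Qf_add[OF symS, of w' ui] by simp
    also have "Bf S \<Gamma> ui w - Bf S \<Gamma> ui w' = Bf S \<Gamma> ui h"
      unfolding h_def by (rule Bf_diff)
    also have "Bf S \<Gamma> ui h = (\<Sum>y\<in>W. ui y * L y)"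
      unfolding L_def
    proof (rule Bf_restrict[OF finS])
      show "W \<subseteq> S" "X \<union> Z \<subseteq> S" using W_def S_def Z by auto
      show "\<forall>x. x \<notin> W \<longrightarrow> ui x = 0" using u by (auto simp: confs_def ui_def)
      show "\<forall>x. x \<notin> X \<union> Z \<longrightarrow> h x = 0" using jX jX' s t by (auto simp: confs_def h_def w_def w'_def)
    qed
    also have "E d (Qf S \<Gamma> w - Qf S \<Gamma> w' + 2 * (\<Sum>y\<in>W. ui y * L y))
        = E d (Qf S \<Gamma> w - Qf S \<Gamma> w') * (\<Prod>y\<in>W. E d (2 * int (u y) * L y))"
      by (simp add: E_add[symmetric] sum_distrib_left E_sum ui_def mult.assoc)
    finally show ?thesis by simp
  qed
  have "(\<Sum>u\<in>confs d W. cnj (graph_code_kernel d X Y \<Gamma> (\<lambda>x. u x + s x) jX') *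
            graph_code_kernel d X Y \<Gamma> (\<lambda>x. u x + t x) jX)
      = (\<Sum>u\<in>confs d W. complex_of_real (r * r) * E d (Qf S \<Gamma> w - Qf S \<Gamma> w') * (\<Prod>y\<in>W. E d (2 * int (u y) * L y)))"
    using step1 by (rule sum.cong[OF refl])
  also have "\<dots> = complex_of_real (r * r) * E d (Qf S \<Gamma> w - Qf S \<Gamma> w') * (\<Sum>u\<in>confs d W. \<Prod>y\<in>W. E d (2 * int (u y) * L y))"
    by (simp add: sum_distrib_left)
  also have "(\<Sum>u\<in>confs d W. \<Prod>y\<in>W. E d (2 * int (u y) * L y)) = (\<Prod>y\<in>W. \<Sum>k<d. E d (2 * int k * L y))"
    by (rule confs_prod_sum[OF finW])
  also have "\<dots> = (\<Prod>y\<in>W. if L y mod int d = 0 then of_nat d else 0)"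
    using d by (simp add: E_geo)
  finally have main: "(\<Sum>u\<in>confs d W. cnj (graph_code_kernel d X Y \<Gamma> (\<lambda>x. u x + s x) jX') *
            graph_code_kernel d X Y \<Gamma> (\<lambda>x. u x + t x) jX)
     = complex_of_real (r * r) * E d (Qf S \<Gamma> w - Qf S \<Gamma> w') * (\<Prod>y\<in>W. if L y mod int d = 0 then of_nat d else 0)" .
  have wb: "0 \<le> w x \<and> w x < int d" "0 \<le> w' x \<and> w' x < int d" if "x \<in> X \<union> Z" for x
    using that jX jX' s t XZ by (auto simp: confs_def w_def w'_def)
  have w0: "w x = 0" "w' x = 0" if "x \<notin> X \<union> Z" for x
    using that jX jX' s t by (auto simp: confs_def w_def w'_def)
  show ?thesis
  proof (cases "\<forall>y\<in>W. L y mod int d = 0")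
    case True
    hence "\<forall>x\<in>X \<union> Z. h x mod int d = 0" using inj unfolding L_def W_def by blast
    hence ww: "w = w'"
    proof -
      assume hm: "\<forall>x\<in>X \<union> Z. h x mod int d = 0"
      show "w = w'"
      proof
        fix x show "w x = w' x"
        proof (cases "x \<in> X \<union> Z")
          case True thus ?thesis using small_mod_eq[of "w x" "int d" "w' x"] wb[OF True] hm h_def by auto
        next
          case False thus ?thesis using w0 by simp
        qed
      qed
    qed
    have eq: "jX' = jX \<and> s = t"
    proof
      show "jX' = jX"
      proof
        fix x show "jX' x = jX x"
        proof (cases "x \<in> X")
          case True
          hence "x \<notin> Z" using XZ by auto
          hence "t x = 0" "s x = 0" using s t by (auto simp: confs_def)
          thus ?thesis using fun_cong[OF ww, of x] by (simp add: w_def w'_def)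
        next
          case False thus ?thesis using jX jX' by (auto simp: confs_def)
        qed
      qed
      show "s = t"
      proof
        fix x show "s x = t x"
        proof (cases "x \<in> Z")
          case True
          hence "x \<notin> X" using XZ by auto
          hence "jX x = 0" "jX' x = 0" using jX jX' by (auto simp: confs_def)
          thus ?thesis using fun_cong[OF ww, of x] by (simp add: w_def w'_def)
        next
          case False thus ?thesis using s t by (auto simp: confs_def)
        qed
      qed
    qed
    have "(\<Prod>y\<in>W. if L y mod int d = 0 then (of_nat d :: complex) else 0) = of_nat d ^ card W"
      using True by simp
    thus ?thesis using main eq ww by (simp add: E_0 r_def W_def)
  next
    case False
    then obtain y where y: "y \<in> W" "L y mod int d \<noteq> 0" by blast
    have "(\<Prod>y\<in>W. if L y mod int d = 0 then (of_nat d :: complex) else 0) = 0"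
      using y finW by (intro prod_zero) auto
    moreover have "\<not> (jX' = jX \<and> s = t)"
    proof
      assume "jX' = jX \<and> s = t"
      hence "h = (\<lambda>_. 0)" by (auto simp: h_def w_def w'_def)
      hence "L y = 0" by (simp add: L_def)
      thus False using y by simp
    qed
    ultimately show ?thesis using main by (auto simp: W_def)
  qed
qed


definition MM :: "nat \<Rightarrow> 'a set \<Rightarrow> 'a set \<Rightarrow> ('a \<Rightarrow> 'a \<Rightarrow> int) \<Rightarrow> (('a \<Rightarrow> nat) \<Rightarrow> ('a \<Rightarrow> nat) \<Rightarrow> complex)
    \<Rightarrow> ('a \<Rightarrow> nat) \<Rightarrow> ('a \<Rightarrow> nat) \<Rightarrow> complex" where
  "MM d X Y \<Gamma> G jX' jX = (\<Sum>a\<in>confs d Y. \<Sum>b\<in>confs d Y.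
      cnj (graph_code_kernel d X Y \<Gamma> a jX') * G a b * graph_code_kernel d X Y \<Gamma> b jX)"

lemma tensor_split:
  assumes finY: "finite Y" and Z: "Z \<subseteq> Y" and idW: "\<forall>y\<in>Y - Z. is_id_mat d (C y)"
    and u: "u \<in> confs d (Y - Z)" and v: "v \<in> confs d (Y - Z)" and s: "s \<in> confs d Z" and t: "t \<in> confs d Z"
  shows "tensor_op Y C (\<lambda>x. u x + s x) (\<lambda>x. v x + t x) = (if u = v then 1 else 0) * (\<Prod>y\<in>Z. C y (s y) (t y))"
proof -
  have Y: "Y = (Y - Z) \<union> Z" using Z by auto
  have finZ: "finite Z" using Z finY finite_subset by auto
  have "tensor_op Y C (\<lambda>x. u x + s x) (\<lambda>x. v x + t x)
      = (\<Prod>y\<in>(Y - Z) \<union> Z. C y (u y + s y) (v y + t y))"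
    unfolding tensor_op_def using Y by simp
  also have "\<dots> = (\<Prod>y\<in>Y - Z. C y (u y + s y) (v y + t y)) * (\<Prod>y\<in>Z. C y (u y + s y) (v y + t y))"
    using finY finZ by (intro prod.union_disjoint) auto
  also have "(\<Prod>y\<in>Y - Z. C y (u y + s y) (v y + t y)) = (\<Prod>y\<in>Y - Z. if u y = v y then 1 else 0)"
  proof (rule prod.cong[OF refl])
    fix y assume y: "y \<in> Y - Z"
    hence "s y = 0" "t y = 0" "u y < d" "v y < d" using s t u v by (auto simp: confs_def)
    thus "C y (u y + s y) (v y + t y) = (if u y = v y then 1 else 0)"
      using idW y unfolding is_id_mat_def by simp
  qed
  also have "(\<Prod>y\<in>Y - Z. if u y = v y then 1 else 0) = (if u = v then 1 else (0::complex))"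
  proof (cases "u = v")
    case True then show ?thesis by simp
  next
    case False
    then obtain y where "u y \<noteq> v y" by auto
    moreover have "y \<in> Y - Z" using calculation u v unfolding confs_def by (metis (mono_tags, lifting) mem_Collect_eq)
    ultimately have "(\<Prod>y\<in>Y - Z. if u y = v y then 1 else (0::complex)) = 0"
      using finY by (intro prod_zero) auto
    thus ?thesis using False by simp
  qed
  also have "(\<Prod>y\<in>Z. C y (u y + s y) (v y + t y)) = (\<Prod>y\<in>Z. C y (s y) (t y))"
  proof (rule prod.cong[OF refl])
    fix y assume y: "y \<in> Z"
    hence "u y = 0" "v y = 0" using u v by (auto simp: confs_def)
    thus "C y (u y + s y) (v y + t y) = C y (s y) (t y)" by simp
  qed
  finally show ?thesis .
qed


lemma MM_tensor:
  fixes d :: nat and X Y Z :: "'a set" and \<Gamma> :: "'a \<Rightarrow> 'a \<Rightarrow> int"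
  assumes d: "d \<ge> 2" and finX: "finite X" and finY: "finite Y" and disj: "X \<inter> Y = {}"
    and sym: "\<forall>x\<in>X \<union> Y. \<forall>y\<in>X \<union> Y. \<Gamma> x y = \<Gamma> y x"
    and Z: "Z \<subseteq> Y"
    and inj: "\<forall>h :: 'a \<Rightarrow> int. (\<forall>y\<in>Y - Z. (\<Sum>x\<in>X \<union> Z. \<Gamma> y x * h x) mod int d = 0) \<longrightarrow>
              (\<forall>x\<in>X \<union> Z. h x mod int d = 0)"
    and idW: "\<forall>y\<in>Y - Z. is_id_mat d (C y)"
  shows "\<exists>c. \<forall>jX\<in>confs d X. \<forall>jX'\<in>confs d X. MM d X Y \<Gamma> (tensor_op Y C) jX' jX = (if jX' = jX then c else 0)"
proof -
  define W where "W = Y - Z"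
  define K where "K = graph_code_kernel d X Y \<Gamma>"
  define Ct where "Ct = (\<lambda>s t. \<Prod>y\<in>Z. C y (s y) (t y))"
  define R where "R = complex_of_real (real d powr (- real (card Y) / 2) * real d powr (- real (card Y) / 2)) * of_nat d ^ card (Y - Z)"
  have finZ: "finite Z" using Z finY finite_subset by auto
  have finW: "finite W" using finY W_def by simp
  have disjWZ: "W \<inter> Z = {}" using W_def by auto
  have YWZ: "confs d Y = confs d (W \<union> Z)" using Z W_def by (simp add: Un_absorb2 Un_commute)
  have IS: "(\<Sum>u\<in>confs d W. cnj (K (\<lambda>x. u x + s x) jX') * K (\<lambda>x. u x + t x) jX) = (if jX' = jX \<and> s = t then R else 0)"
    if "jX \<in> confs d X" "jX' \<in> confs d X" "s \<in> confs d Z" "t \<in> confs d Z" for jX jX' s t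
    unfolding K_def R_def W_def by (rule inner_sum[OF d finX finY disj sym Z inj that])
  have "MM d X Y \<Gamma> (tensor_op Y C) jX' jX = (if jX' = jX then (\<Sum>s\<in>confs d Z. Ct s s * R) else 0)"
    if jX: "jX \<in> confs d X" and jX': "jX' \<in> confs d X" for jX jX'
  proof -
    have "MM d X Y \<Gamma> (tensor_op Y C) jX' jX = (\<Sum>u\<in>confs d W. \<Sum>s\<in>confs d Z. \<Sum>v\<in>confs d W. \<Sum>t\<in>confs d Z.
        cnj (K (\<lambda>x. u x + s x) jX') * tensor_op Y C (\<lambda>x. u x + s x) (\<lambda>x. v x + t x) * K (\<lambda>x. v x + t x) jX)"
      unfolding MM_def YWZ confs_split_sum[OF disjWZ finW finZ] K_def ..
    also have "\<dots> = (\<Sum>u\<in>confs d W. \<Sum>s\<in>confs d Z. \<Sum>v\<in>confs d W. \<Sum>t\<in>confs d Z.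
        (if u = v then cnj (K (\<lambda>x. u x + s x) jX') * Ct s t * K (\<lambda>x. u x + t x) jX else 0))"
      by (intro sum.cong refl) (simp add: tensor_split[OF finY Z idW[folded W_def, unfolded W_def]] W_def Ct_def)
    also have "\<dots> = (\<Sum>u\<in>confs d W. \<Sum>s\<in>confs d Z. \<Sum>t\<in>confs d Z.
        cnj (K (\<lambda>x. u x + s x) jX') * Ct s t * K (\<lambda>x. u x + t x) jX)"
    proof (rule sum.cong[OF refl], rule sum.cong[OF refl])
      fix u s assume u: "u \<in> confs d W"
      have "(\<Sum>v\<in>confs d W. \<Sum>t\<in>confs d Z.
          (if u = v then cnj (K (\<lambda>x. u x + s x) jX') * Ct s t * K (\<lambda>x. u x + t x) jX else 0))
        = (\<Sum>v\<in>confs d W. if u = v then (\<Sum>t\<in>confs d Z. cnj (K (\<lambda>x. u x + s x) jX') * Ct s t * K (\<lambda>x. u x + t x) jX) else 0)"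
        by (intro sum.cong refl) auto
      also have "\<dots> = (\<Sum>t\<in>confs d Z. cnj (K (\<lambda>x. u x + s x) jX') * Ct s t * K (\<lambda>x. u x + t x) jX)"
        using u confs_finite[OF finW] by (simp add: sum.delta)
      finally show "(\<Sum>v\<in>confs d W. \<Sum>t\<in>confs d Z.
          (if u = v then cnj (K (\<lambda>x. u x + s x) jX') * Ct s t * K (\<lambda>x. u x + t x) jX else 0))
        = (\<Sum>t\<in>confs d Z. cnj (K (\<lambda>x. u x + s x) jX') * Ct s t * K (\<lambda>x. u x + t x) jX)" .
    qed
    also have "\<dots> = (\<Sum>s\<in>confs d Z. \<Sum>u\<in>confs d W. \<Sum>t\<in>confs d Z.
        cnj (K (\<lambda>x. u x + s x) jX') * Ct s t * K (\<lambda>x. u x + t x) jX)"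
      by (rule sum.swap)
    also have "\<dots> = (\<Sum>s\<in>confs d Z. \<Sum>t\<in>confs d Z. \<Sum>u\<in>confs d W.
        cnj (K (\<lambda>x. u x + s x) jX') * Ct s t * K (\<lambda>x. u x + t x) jX)"
      by (intro sum.cong refl sum.swap)
    also have "\<dots> = (\<Sum>s\<in>confs d Z. \<Sum>t\<in>confs d Z. Ct s t *
        (\<Sum>u\<in>confs d W. cnj (K (\<lambda>x. u x + s x) jX') * K (\<lambda>x. u x + t x) jX))"
      by (simp add: sum_distrib_left mult_ac)
    also have "\<dots> = (\<Sum>s\<in>confs d Z. \<Sum>t\<in>confs d Z. Ct s t * (if jX' = jX \<and> s = t then R else 0))"
      using IS jX jX' by (intro sum.cong refl) simp
    also have "\<dots> = (\<Sum>s\<in>confs d Z. if jX' = jX then Ct s s * R else 0)"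
    proof (intro sum.cong refl)
      fix s assume s: "s \<in> confs d Z"
      have "(\<Sum>t\<in>confs d Z. Ct s t * (if jX' = jX \<and> s = t then R else 0))
          = (\<Sum>t\<in>confs d Z. if s = t then (if jX' = jX then Ct s t * R else 0) else 0)"
        by (intro sum.cong refl) auto
      also have "\<dots> = (if jX' = jX then Ct s s * R else 0)"
        using s confs_finite[OF finZ] by (simp add: sum.delta)
      finally show "(\<Sum>t\<in>confs d Z. Ct s t * (if jX' = jX \<and> s = t then R else 0)) = (if jX' = jX then Ct s s * R else 0)" .
    qed
    also have "\<dots> = (if jX' = jX then (\<Sum>s\<in>confs d Z. Ct s s * R) else 0)"
      by simp
    finally show ?thesis .
  qed
  thus ?thesis by blast
qed


lemma inner_expand:
  "inner_W d Y (graph_code d X Y \<Gamma> \<phi>1) (apply_op d Y G (graph_code d X Y \<Gamma> \<phi>2))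
    = (\<Sum>p\<in>confs d X. \<Sum>q\<in>confs d X. cnj (\<phi>1 p) * \<phi>2 q * MM d X Y \<Gamma> G p q)"
proof -
  define K where "K = graph_code_kernel d X Y \<Gamma>"
  have "inner_W d Y (graph_code d X Y \<Gamma> \<phi>1) (apply_op d Y G (graph_code d X Y \<Gamma> \<phi>2))
     = (\<Sum>a\<in>confs d Y. (\<Sum>p\<in>confs d X. cnj (K a p) * cnj (\<phi>1 p)) * (\<Sum>b\<in>confs d Y. \<Sum>q\<in>confs d X. G a b * K b q * \<phi>2 q))"
    unfolding inner_W_def apply_op_def graph_code_def K_def
    by (simp add: sum_distrib_left mult.assoc)
  also have "\<dots> = (\<Sum>a\<in>confs d Y. \<Sum>p\<in>confs d X. \<Sum>b\<in>confs d Y. \<Sum>q\<in>confs d X.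
        cnj (K a p) * cnj (\<phi>1 p) * (G a b * K b q * \<phi>2 q))"
    by (subst sum_product, simp only: sum_distrib_left)
  also have "\<dots> = (\<Sum>p\<in>confs d X. \<Sum>a\<in>confs d Y. \<Sum>b\<in>confs d Y. \<Sum>q\<in>confs d X.
        cnj (K a p) * cnj (\<phi>1 p) * (G a b * K b q * \<phi>2 q))"
    by (rule sum.swap)
  also have "\<dots> = (\<Sum>p\<in>confs d X. \<Sum>a\<in>confs d Y. \<Sum>q\<in>confs d X. \<Sum>b\<in>confs d Y.
        cnj (K a p) * cnj (\<phi>1 p) * (G a b * K b q * \<phi>2 q))"
    by (rule sum.cong[OF refl], rule sum.cong[OF refl], rule sum.swap)
  also have "\<dots> = (\<Sum>p\<in>confs d X. \<Sum>q\<in>confs d X. \<Sum>a\<in>confs d Y. \<Sum>b\<in>confs d Y.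
        cnj (K a p) * cnj (\<phi>1 p) * (G a b * K b q * \<phi>2 q))"
    by (rule sum.cong[OF refl], rule sum.swap)
  also have "\<dots> = (\<Sum>p\<in>confs d X. \<Sum>q\<in>confs d X. cnj (\<phi>1 p) * \<phi>2 q * MM d X Y \<Gamma> G p q)"
    unfolding MM_def K_def by (simp add: sum_distrib_left mult_ac)
  finally show ?thesis .
qed

lemma inner_scalar:
  assumes finX: "finite X" and "\<forall>q\<in>confs d X. \<forall>p\<in>confs d X. MM d X Y \<Gamma> G p q = (if p = q then c else 0)"
  shows "inner_W d Y (graph_code d X Y \<Gamma> \<phi>1) (apply_op d Y G (graph_code d X Y \<Gamma> \<phi>2))
    = inner_W d X \<phi>1 \<phi>2 * c"
proof -
  have "inner_W d Y (graph_code d X Y \<Gamma> \<phi>1) (apply_op d Y G (graph_code d X Y \<Gamma> \<phi>2))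
    = (\<Sum>p\<in>confs d X. \<Sum>q\<in>confs d X. if p = q then cnj (\<phi>1 p) * \<phi>2 q * c else 0)"
    unfolding inner_expand using assms(2) by (intro sum.cong refl) auto
  also have "\<dots> = (\<Sum>p\<in>confs d X. cnj (\<phi>1 p) * \<phi>2 p * c)"
  proof (rule sum.cong[OF refl])
    fix p assume "p \<in> confs d X"
    thus "(\<Sum>q\<in>confs d X. if p = q then cnj (\<phi>1 p) * \<phi>2 q * c else 0) = cnj (\<phi>1 p) * \<phi>2 p * c"
      using confs_finite[OF finX] by (simp add: sum.delta)
  qed
  also have "\<dots> = inner_W d X \<phi>1 \<phi>2 * c"
    unfolding inner_W_def by (simp add: sum_distrib_right)
  finally show ?thesis .
qed

lemma MM_cong:
  assumes "\<forall>a\<in>confs d Y. \<forall>b\<in>confs d Y. G a b = G' a b"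
  shows "MM d X Y \<Gamma> G p q = MM d X Y \<Gamma> G' p q"
  unfolding MM_def using assms by (intro sum.cong refl) auto

lemma MM_sum:
  "MM d X Y \<Gamma> (\<lambda>a b. \<Sum>i\<in>I. F i a b) p q = (\<Sum>i\<in>I. MM d X Y \<Gamma> (F i) p q)"
proof -
  have "MM d X Y \<Gamma> (\<lambda>a b. \<Sum>i\<in>I. F i a b) p q = (\<Sum>a\<in>confs d Y. \<Sum>b\<in>confs d Y. \<Sum>i\<in>I.
      cnj (graph_code_kernel d X Y \<Gamma> a p) * F i a b * graph_code_kernel d X Y \<Gamma> b q)"
    unfolding MM_def by (simp add: sum_distrib_left sum_distrib_right)
  also have "\<dots> = (\<Sum>a\<in>confs d Y. \<Sum>i\<in>I. \<Sum>b\<in>confs d Y.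
      cnj (graph_code_kernel d X Y \<Gamma> a p) * F i a b * graph_code_kernel d X Y \<Gamma> b q)"
    by (rule sum.cong[OF refl], rule sum.swap)
  also have "\<dots> = (\<Sum>i\<in>I. \<Sum>a\<in>confs d Y. \<Sum>b\<in>confs d Y.
      cnj (graph_code_kernel d X Y \<Gamma> a p) * F i a b * graph_code_kernel d X Y \<Gamma> b q)"
    by (rule sum.swap)
  finally show ?thesis unfolding MM_def .
qed

lemma MM_scale:
  "MM d X Y \<Gamma> (\<lambda>a b. c * F a b) p q = c * MM d X Y \<Gamma> F p q"
  unfolding MM_def by (simp add: sum_distrib_left mult_ac)


definition pm :: "nat \<Rightarrow> (nat \<Rightarrow> nat \<Rightarrow> complex) \<Rightarrow> (nat \<Rightarrow> nat \<Rightarrow> complex) \<Rightarrow> nat \<Rightarrow> nat \<Rightarrow> complex" where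
  "pm d P Q i k = (\<Sum>c<d. cnj (P c i) * Q c k)"

lemma pm_id:
  assumes "is_id_mat d P" "is_id_mat d Q"
  shows "is_id_mat d (pm d P Q)"
  unfolding is_id_mat_def
proof (intro allI impI)
  fix i k assume i: "i < d" and k: "k < d"
  have "pm d P Q i k = (\<Sum>c<d. if c = k then (if i = k then 1 else 0) else 0)"
    unfolding pm_def using assms i k by (intro sum.cong refl) (auto simp: is_id_mat_def)
  also have "\<dots> = (if i = k then 1 else 0)" using k by (simp add: sum.delta')
  finally show "pm d P Q i k = (if i = k then 1 else 0)" .
qed

lemma tensor_adj:
  assumes "finite Y"
  shows "(\<Sum>c\<in>confs d Y. cnj (tensor_op Y A c a) * tensor_op Y B c b) = tensor_op Y (\<lambda>y. pm d (A y) (B y)) a b"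
proof -
  have "(\<Sum>c\<in>confs d Y. cnj (tensor_op Y A c a) * tensor_op Y B c b)
      = (\<Sum>c\<in>confs d Y. \<Prod>y\<in>Y. cnj (A y (c y) (a y)) * B y (c y) (b y))"
    unfolding tensor_op_def by (simp add: prod.distrib)
  also have "\<dots> = (\<Prod>y\<in>Y. \<Sum>i<d. cnj (A y i (a y)) * B y i (b y))"
    by (rule confs_prod_sum[OF assms])
  finally show ?thesis unfolding tensor_op_def pm_def .
qed

lemma adj_tensor:
  assumes "finite Y" "a \<in> confs d Y" "b \<in> confs d Y"
  shows "adj_comp d Y (\<lambda>j' j. \<Sum>k<N1. c1 k * tensor_op Y (A k) j' j) (\<lambda>j' j. \<Sum>l<N2. c2 l * tensor_op Y (B l) j' j) a b
    = (\<Sum>k<N1. \<Sum>l<N2. (cnj (c1 k) * c2 l) * tensor_op Y (\<lambda>y. pm d (A k y) (B l y)) a b)"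
proof -
  have "adj_comp d Y (\<lambda>j' j. \<Sum>k<N1. c1 k * tensor_op Y (A k) j' j) (\<lambda>j' j. \<Sum>l<N2. c2 l * tensor_op Y (B l) j' j) a b
      = (\<Sum>c\<in>confs d Y. \<Sum>k<N1. \<Sum>l<N2. (cnj (c1 k) * c2 l) * (cnj (tensor_op Y (A k) c a) * tensor_op Y (B l) c b))"
    unfolding adj_comp_def using assms(2,3)
    by (simp add: sum_product mult_ac del: cnj_prod) (rule sum.cong[OF refl], rule sum.swap)
  also have "\<dots> = (\<Sum>k<N1. \<Sum>c\<in>confs d Y. \<Sum>l<N2. (cnj (c1 k) * c2 l) * (cnj (tensor_op Y (A k) c a) * tensor_op Y (B l) c b))"
    by (rule sum.swap)
  also have "\<dots> = (\<Sum>k<N1. \<Sum>l<N2. \<Sum>c\<in>confs d Y. (cnj (c1 k) * c2 l) * (cnj (tensor_op Y (A k) c a) * tensor_op Y (B l) c b))"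
    by (rule sum.cong[OF refl], rule sum.swap)
  also have "\<dots> = (\<Sum>k<N1. \<Sum>l<N2. (cnj (c1 k) * c2 l) * tensor_op Y (\<lambda>y. pm d (A k y) (B l y)) a b)"
    by (simp add: sum_distrib_left[symmetric] tensor_adj[OF assms(1)] del: cnj_prod)
  finally show ?thesis .
qed


theorem corollary1:
  fixes d f :: nat and X Y :: "'a set" and \<Gamma> :: "'a \<Rightarrow> 'a \<Rightarrow> int"
  assumes "d \<ge> 2"
    and "finite X" and "finite Y" and "X \<inter> Y = {}"
    and "\<forall>x\<in>X \<union> Y. \<forall>y\<in>X \<union> Y. 0 \<le> \<Gamma> x y \<and> \<Gamma> x y < int d"
    and "\<forall>x\<in>X \<union> Y. \<forall>y\<in>X \<union> Y. \<Gamma> x y = \<Gamma> y x"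
    and "\<forall>x\<in>X \<union> Y. \<Gamma> x x = 0"
    and "\<forall>Z. Z \<subseteq> Y \<and> card Z \<le> 2 * f \<longrightarrow>
           (\<forall>h :: 'a \<Rightarrow> int.
              (\<forall>y\<in>Y - Z. (\<Sum>x\<in>X \<union> Z. \<Gamma> y x * h x) mod int d = 0) \<longrightarrow>
              (\<forall>x\<in>X \<union> Z. h x mod int d = 0))"
  shows "corrects_errors d X Y (graph_code d X Y \<Gamma>) f"
proof -
  note d = assms(1) and finX = assms(2) and finY = assms(3) and disj = assms(4)
    and sym = assms(6) and hyp = assms(8)
  define V where "V = graph_code d X Y \<Gamma>"
  define z0 where "z0 = (\<lambda>j::'a \<Rightarrow> nat. if j = (\<lambda>_. 0) then 1 else (0::complex))"
  have z0norm: "inner_W d X z0 z0 = 1"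
  proof -
    have "(\<lambda>_. 0) \<in> confs d X" using d by (auto simp: confs_def)
    hence "(\<Sum>j\<in>confs d X. if j = (\<lambda>_. 0) then (1::complex) else 0) = 1"
      using confs_finite[OF finX] by (simp add: sum.delta')
    thus ?thesis unfolding inner_W_def z0_def by (simp add: if_distrib cong: if_cong)
  qed
  have SC: "\<exists>c. \<forall>q\<in>confs d X. \<forall>p\<in>confs d X. MM d X Y \<Gamma> (adj_comp d Y F1 F2) p q = (if p = q then c else 0)"
    if F1: "F1 \<in> error_space d Y f" and F2: "F2 \<in> error_space d Y f" for F1 F2
  proof -
    obtain N1 :: nat and c1 A where A: "\<forall>k<N1. card {y\<in>Y. \<not> is_id_mat d (A k y)} \<le> f"
      and F1e: "F1 = (\<lambda>j' j. \<Sum>k<N1. c1 k * tensor_op Y (A k) j' j)"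
      using F1 unfolding error_space_def mem_Collect_eq by blast
    obtain N2 :: nat and c2 B where B: "\<forall>k<N2. card {y\<in>Y. \<not> is_id_mat d (B k y)} \<le> f"
      and F2e: "F2 = (\<lambda>j' j. \<Sum>k<N2. c2 k * tensor_op Y (B k) j' j)"
      using F2 unfolding error_space_def mem_Collect_eq by blast
    define T where "T = (\<lambda>k l. tensor_op Y (\<lambda>y. pm d (A k y) (B l y)))"
    have ex: "\<forall>kl. \<exists>c. fst kl < N1 \<and> snd kl < N2 \<longrightarrow>
      (\<forall>jX\<in>confs d X. \<forall>jX'\<in>confs d X. MM d X Y \<Gamma> (T (fst kl) (snd kl)) jX' jX = (if jX' = jX then c else 0))"
    proof
      fix kl :: "nat \<times> nat"
      obtain k l where kl: "kl = (k, l)" by fastforce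
      show "\<exists>c. fst kl < N1 \<and> snd kl < N2 \<longrightarrow>
        (\<forall>jX\<in>confs d X. \<forall>jX'\<in>confs d X. MM d X Y \<Gamma> (T (fst kl) (snd kl)) jX' jX = (if jX' = jX then c else 0))"
      proof (cases "k < N1 \<and> l < N2")
        case True
        define Z where "Z = {y\<in>Y. \<not> is_id_mat d (pm d (A k y) (B l y))}"
        have Zsub: "Z \<subseteq> {y\<in>Y. \<not> is_id_mat d (A k y)} \<union> {y\<in>Y. \<not> is_id_mat d (B l y)}"
          unfolding Z_def using pm_id by blast
        have "card Z \<le> card ({y\<in>Y. \<not> is_id_mat d (A k y)} \<union> {y\<in>Y. \<not> is_id_mat d (B l y)})"
          using Zsub finY by (intro card_mono) auto
        also have "\<dots> \<le> card {y\<in>Y. \<not> is_id_mat d (A k y)} + card {y\<in>Y. \<not> is_id_mat d (B l y)}"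
          by (rule card_Un_le)
        also have "\<dots> \<le> 2 * f" using A B True by fastforce
        finally have cZ: "card Z \<le> 2 * f" .
        have ZY: "Z \<subseteq> Y" unfolding Z_def by auto
        have idW: "\<forall>y\<in>Y - Z. is_id_mat d (pm d (A k y) (B l y))" unfolding Z_def by auto
        from MM_tensor[OF d finX finY disj sym ZY _ idW] hyp ZY cZ
        show ?thesis unfolding kl T_def by auto
      next
        case False thus ?thesis unfolding kl by auto
      qed
    qed
    then obtain cf where cf: "\<And>k l jX jX'. k < N1 \<Longrightarrow> l < N2 \<Longrightarrow> jX \<in> confs d X \<Longrightarrow> jX' \<in> confs d X \<Longrightarrow>
        MM d X Y \<Gamma> (T k l) jX' jX = (if jX' = jX then cf (k, l) else 0)"
      by (metis choice fst_conv snd_conv)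
    have "MM d X Y \<Gamma> (adj_comp d Y F1 F2) p q = (if p = q then (\<Sum>k<N1. \<Sum>l<N2. cnj (c1 k) * c2 l * cf (k, l)) else 0)"
      if p: "p \<in> confs d X" and q: "q \<in> confs d X" for p q
    proof -
      have "MM d X Y \<Gamma> (adj_comp d Y F1 F2) p q
          = MM d X Y \<Gamma> (\<lambda>a b. \<Sum>k<N1. \<Sum>l<N2. (cnj (c1 k) * c2 l) * T k l a b) p q"
        unfolding F1e F2e T_def using adj_tensor[OF finY] by (intro MM_cong) blast
      also have "\<dots> = (\<Sum>k<N1. \<Sum>l<N2. (cnj (c1 k) * c2 l) * MM d X Y \<Gamma> (T k l) p q)"
        by (simp only: MM_sum MM_scale)
      also have "\<dots> = (\<Sum>k<N1. \<Sum>l<N2. if p = q then cnj (c1 k) * c2 l * cf (k, l) else 0)"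
        using cf p q by (intro sum.cong refl) auto
      also have "\<dots> = (if p = q then (\<Sum>k<N1. \<Sum>l<N2. cnj (c1 k) * c2 l * cf (k, l)) else 0)"
        by simp
      finally show ?thesis .
    qed
    thus ?thesis by blast
  qed
  show ?thesis
    unfolding corrects_errors_def
  proof (intro exI[where x = "\<lambda>G. inner_W d Y (V z0) (apply_op d Y G (V z0))"] ballI allI)
    fix F1 F2 \<phi>1 \<phi>2
    assume F1: "F1 \<in> error_space d Y f" and F2: "F2 \<in> error_space d Y f"
    obtain c where c: "\<forall>q\<in>confs d X. \<forall>p\<in>confs d X. MM d X Y \<Gamma> (adj_comp d Y F1 F2) p q = (if p = q then c else 0)"
      using SC[OF F1 F2] by blast
    have "inner_W d Y (V z0) (apply_op d Y (adj_comp d Y F1 F2) (V z0)) = c"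
      unfolding V_def using inner_scalar[OF finX c] z0norm by simp
    thus "inner_W d Y (graph_code d X Y \<Gamma> \<phi>1) (apply_op d Y (adj_comp d Y F1 F2) (graph_code d X Y \<Gamma> \<phi>2)) =
        inner_W d X \<phi>1 \<phi>2 * inner_W d Y (V z0) (apply_op d Y (adj_comp d Y F1 F2) (V z0))"
      using inner_scalar[OF finX c] by simp
  qed
qed

end
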